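(* Assume (A1), (B1) with $m_0=m$, and (B2), and suppose the limit $G$ has a density that is positive in a neighborhood of the origin. If (A3) does not hold, then $$\liminf_{n\to\infty}\mathbb P\big((\mathrm{P}_{b_n})\text{ has more than one optimal solution}\big)>0.$$
   Context: $A\in\mathbb{R}^{m\times d}$ of full rank $m\le d$, $b\in\mathbb{R}^m$, $c\in\mathbb{R}^d$; $(\mathrm{P}_\beta)$: $\min c^Tx$ s.t. $Ax=\beta,x\ge0$; $(\mathrm{D}_\beta)$: $\max\beta^T\lambda$ s.t. $A^T\lambda\le c$. A basis is $I\subseteq[d]$, $|I|=m$, $A_I$ invertible; $x(I,\beta)$ has coordinates $(A_I)^{-1}\beta$ on $I$ and $0$ elsewhere; $\lambda(I)=(A_I)^{-T}c_I$; $I$ is dual feasible if $A^T\lambda(I)\le c$. $I_1,\dots,I_K$ are the dual feasible bases with $x(I_k,b)\ge0$. (A1): the optimal set of $(\mathrm{P}_b)$ is non-empty and bounded. (A3): $\lambda(I_j)\ne\lambda(I_k)$ for $1\le j<k\le K$. Stochastic: $r_n\to\infty$, random $b_n\in\mathbb{R}^m$; (B1) with $m_0=m$: $r_n(b_n-b)\xrightarrow{D}G$ with $G$ absolutely continuous on $\mathbb{R}^m$; (B2): $\mathbb P((\mathrm{P}_{b_n})\text{ has an optimal solution})\to1$. *)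

theory Defs
  imports "HOL-Probability.Probability"
begin

definition lp_feasible :: "real^'d^'m \<Rightarrow> real^'m \<Rightarrow> (real^'d) set" where
  "lp_feasible A \<beta> = {x. A *v x = \<beta> \<and> (\<forall>j. 0 \<le> x $ j)}"

definition lp_optimal_set :: "real^'d^'m \<Rightarrow> real^'d \<Rightarrow> real^'m \<Rightarrow> (real^'d) set" where
  "lp_optimal_set A c \<beta> =
     {x \<in> lp_feasible A \<beta>. \<forall>y \<in> lp_feasible A \<beta>. c \<bullet> x \<le> c \<bullet> y}"

text \<open>Basis: I subset of column indices with |I| = m and A_I invertible, i.e. the
  linear map z (supported on I) \<mapsto> A z is a bijection onto R^m.\<close>

definition is_basis :: "real^'d^'m \<Rightarrow> 'd set \<Rightarrow> bool" where
  "is_basis A I \<longleftrightarrow> card I = CARD('m) \<and>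
     (\<forall>\<beta>. \<exists>!x. (\<forall>j. j \<notin> I \<longrightarrow> x $ j = 0) \<and> A *v x = \<beta>)"

text \<open>x(I,beta): equals (A_I)^{-1} beta on I and 0 elsewhere.\<close>
definition basic_sol :: "real^'d^'m \<Rightarrow> 'd set \<Rightarrow> real^'m \<Rightarrow> real^'d" where
  "basic_sol A I \<beta> = (THE x. (\<forall>j. j \<notin> I \<longrightarrow> x $ j = 0) \<and> A *v x = \<beta>)"

text \<open>lambda(I) = (A_I)^{-T} c_I, i.e. the unique lambda with (A^T lambda)_i = c_i for i in I.\<close>
definition dual_sol :: "real^'d^'m \<Rightarrow> real^'d \<Rightarrow> 'd set \<Rightarrow> real^'m" where
  "dual_sol A c I = (THE l. \<forall>i\<in>I. (transpose A *v l) $ i = c $ i)"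

definition dual_feasible_basis :: "real^'d^'m \<Rightarrow> real^'d \<Rightarrow> 'd set \<Rightarrow> bool" where
  "dual_feasible_basis A c I \<longleftrightarrow> is_basis A I \<and>
     (\<forall>j. (transpose A *v dual_sol A c I) $ j \<le> c $ j)"

definition opt_bases :: "real^'d^'m \<Rightarrow> real^'d \<Rightarrow> real^'m \<Rightarrow> 'd set set" where
  "opt_bases A c b = {I. dual_feasible_basis A c I \<and> (\<forall>j. 0 \<le> basic_sol A I b $ j)}"

definition cond_A3 :: "real^'d^'m \<Rightarrow> real^'d \<Rightarrow> real^'m \<Rightarrow> bool" where
  "cond_A3 A c b \<longleftrightarrow>
     (\<forall>I\<in>opt_bases A c b. \<forall>J\<in>opt_bases A c b. I \<noteq> J \<longrightarrow> dual_sol A c I \<noteq> dual_sol A c J)"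

definition conv_in_distr :: "'a measure \<Rightarrow> (nat \<Rightarrow> 'a \<Rightarrow> 'b::euclidean_space) \<Rightarrow> 'b measure \<Rightarrow> bool" where
  "conv_in_distr M X G \<longleftrightarrow>
     (\<forall>f :: 'b \<Rightarrow> real. continuous_on UNIV f \<and> bounded (range f) \<longrightarrow>
        (\<lambda>n. \<integral>\<omega>. f (X n \<omega>) \<partial>M) \<longlonglongrightarrow> (\<integral>x. f x \<partial>G))"

end

theory Submission
  imports Defs
begin

lemma basis_sol:
  assumes "is_basis A I"
  shows "(\<forall>j. j \<notin> I \<longrightarrow> basic_sol A I \<beta> $ j = 0) \<and> A *v basic_sol A I \<beta> = \<beta>"
proof -
  have "\<exists>!x. (\<forall>j. j \<notin> I \<longrightarrow> x $ j = 0) \<and> A *v x = \<beta>" using assms unfolding is_basis_def by blast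
  then show ?thesis unfolding basic_sol_def by (rule theI')
qed

lemma basis_uniq:
  assumes "is_basis A I" "\<forall>j. j \<notin> I \<longrightarrow> x $ j = 0" "A *v x = \<beta>"
  shows "basic_sol A I \<beta> = x"
proof -
  have "\<exists>!x. (\<forall>j. j \<notin> I \<longrightarrow> x $ j = 0) \<and> A *v x = \<beta>" using assms unfolding is_basis_def by blast
  then show ?thesis using assms basis_sol[OF assms(1), of \<beta>] by blast
qed

lemma basis_linear:
  assumes "is_basis A I"
  shows "linear (basic_sol A I)"
proof (rule linearI)
  fix x y
  show "basic_sol A I (x + y) = basic_sol A I x + basic_sol A I y"
    apply (rule basis_uniq[OF assms])
    using basis_sol[OF assms] by (auto simp: matrix_vector_right_distrib)
next
  fix s x
  show "basic_sol A I (s *\<^sub>R x) = s *\<^sub>R basic_sol A I x"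
    apply (rule basis_uniq[OF assms])
    using basis_sol[OF assms] by (auto simp: matrix_vector_mult_scaleR)
qed

lemma transp_dot: "(transpose A *v l) \<bullet> x = l \<bullet> (A *v x)" for A :: "real^'d^'m"
  unfolding transpose_matrix_vector by (rule dot_lmul_matrix)

lemma dual_unique:
  assumes B: "is_basis A I"
    and l: "\<forall>i\<in>I. (transpose A *v l) $ i = c $ i"
    and l': "\<forall>i\<in>I. (transpose A *v l') $ i = c $ i"
  shows "l = l'"
proof -
  define \<delta> where "\<delta> = l - l'"
  have z: "\<forall>i\<in>I. (transpose A *v \<delta>) $ i = 0"
    using l l' by (simp add: \<delta>_def matrix_vector_mult_diff_distrib)
  have "\<delta> \<bullet> \<beta> = 0" for \<beta>
  proof -
    let ?x = "basic_sol A I \<beta>"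
    have "\<delta> \<bullet> \<beta> = \<delta> \<bullet> (A *v ?x)" using basis_sol[OF B] by simp
    also have "\<dots> = (transpose A *v \<delta>) \<bullet> ?x" by (rule transp_dot[symmetric])
    also have "\<dots> = (\<Sum>i\<in>UNIV. (transpose A *v \<delta>) $ i * ?x $ i)" by (simp add: inner_vec_def)
    also have "\<dots> = 0" apply (rule sum.neutral) using z basis_sol[OF B, of \<beta>] by auto
    finally show ?thesis .
  qed
  then have "\<delta> \<bullet> \<delta> = 0" by blast
  then show ?thesis by (simp add: \<delta>_def)
qed

lemma dual_exists:
  assumes B: "is_basis A I"
  shows "\<exists>l. \<forall>i\<in>I. (transpose A *v l) $ i = c $ i"
proof -
  define \<phi> where "\<phi> \<beta> = c \<bullet> basic_sol A I \<beta>" for \<beta>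
  have lin: "linear \<phi>" unfolding \<phi>_def
    using basis_linear[OF B] by (simp add: linear_iff inner_add_right)
  define l where "l = (\<chi> j. \<phi> (axis j 1))"
  have rep: "\<phi> \<beta> = l \<bullet> \<beta>" for \<beta>
  proof -
    have "\<phi> \<beta> = \<phi> (\<Sum>j\<in>UNIV. \<beta> $ j *s axis j 1)" by (simp add: basis_expansion)
    also have "\<dots> = (\<Sum>j\<in>UNIV. \<beta> $ j * \<phi> (axis j 1))"
      using lin by (simp add: linear_sum linear_cmul scalar_mult_eq_scaleR)
    also have "\<dots> = l \<bullet> \<beta>" by (simp add: l_def inner_vec_def algebra_simps)
    finally show ?thesis .
  qed
  have "(transpose A *v l) $ i = c $ i" if "i \<in> I" for i
  proof -
    have "(transpose A *v l) $ i = (transpose A *v l) \<bullet> axis i 1" by (simp add: inner_axis)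
    also have "\<dots> = l \<bullet> (A *v axis i 1)" by (rule transp_dot)
    also have "\<dots> = \<phi> (A *v axis i 1)" by (simp add: rep)
    also have "basic_sol A I (A *v axis i 1) = axis i 1"
      by (rule basis_uniq[OF B]) (use that in \<open>auto simp: axis_def\<close>)
    then have "\<phi> (A *v axis i 1) = c \<bullet> axis i 1" by (simp add: \<phi>_def)
    also have "\<dots> = c $ i" by (simp add: inner_axis)
    finally show ?thesis by simp
  qed
  then show ?thesis by blast
qed

lemma dual_sol_prop:
  assumes B: "is_basis A I"
  shows "\<forall>i\<in>I. (transpose A *v dual_sol A c I) $ i = c $ i"
proof -
  have "\<exists>!l. \<forall>i\<in>I. (transpose A *v l) $ i = c $ i"
    using dual_exists[OF B] dual_unique[OF B] by blast
  then show ?thesis unfolding dual_sol_def by (rule theI')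
qed


lemma graph_closed:
  fixes A :: "real^'d^'m" and c :: "real^'d"
  shows "closed {p :: (real^'m) \<times> (real^'d). snd p \<in> lp_optimal_set A c (fst p)}"
proof (subst closed_sequential_limits, intro allI impI, elim conjE)
  fix s :: "nat \<Rightarrow> (real^'m) \<times> (real^'d)" and l
  assume sS: "\<forall>n. s n \<in> {p. snd p \<in> lp_optimal_set A c (fst p)}" and lim: "s \<longlonglongrightarrow> l"
  define \<beta> where "\<beta> n = fst (s n)" for n
  define x where "x n = snd (s n)" for n
  obtain \<beta>0 x0 where l: "l = (\<beta>0, x0)" by (cases l)
  have b: "\<beta> \<longlonglongrightarrow> \<beta>0" unfolding \<beta>_def using tendsto_fst[OF lim] l by simp
  have xl: "x \<longlonglongrightarrow> x0" unfolding x_def using tendsto_snd[OF lim] l by simp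
  have opt: "x n \<in> lp_optimal_set A c (\<beta> n)" for n using sS by (simp add: x_def \<beta>_def)
  have feas: "A *v x n = \<beta> n" "\<And>j. 0 \<le> x n $ j" for n
    using opt[of n] by (auto simp: lp_optimal_set_def lp_feasible_def)
  have "(\<lambda>n. A *v x n) \<longlonglongrightarrow> A *v x0"
    by (rule bounded_linear.tendsto[OF matrix_vector_mul_bounded_linear xl])
  then have "(\<lambda>n. \<beta> n) \<longlonglongrightarrow> A *v x0" using feas(1) by simp
  then have Ax0: "A *v x0 = \<beta>0" using b LIMSEQ_unique by blast
  have x0nn: "0 \<le> x0 $ j" for j
  proof -
    have "(\<lambda>n. x n $ j) \<longlonglongrightarrow> x0 $ j" by (rule tendsto_vec_nth[OF xl])
    then show ?thesis by (rule LIMSEQ_le_const) (use feas(2) in auto)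
  qed
  have f0: "x0 \<in> lp_feasible A \<beta>0" using Ax0 x0nn by (simp add: lp_feasible_def)
  have "c \<bullet> x0 \<le> c \<bullet> z" if z: "z \<in> lp_feasible A \<beta>0" for z
  proof -
    have zA: "A *v z = \<beta>0" and zn: "\<And>j. 0 \<le> z $ j" using z by (auto simp: lp_feasible_def)
    have "\<forall>\<^sub>F n in sequentially. 0 \<le> x n $ j + (z $ j - x0 $ j) / 2" for j
    proof (cases "x0 $ j \<le> z $ j")
      case True then show ?thesis using feas(2) by (auto intro!: always_eventually add_nonneg_nonneg)
    next
      case False
      have "(\<lambda>n. x n $ j) \<longlonglongrightarrow> x0 $ j" by (rule tendsto_vec_nth[OF xl])
      moreover have "(x0 $ j - z $ j) / 2 < x0 $ j" using False zn[of j] by simp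
      ultimately have "\<forall>\<^sub>F n in sequentially. (x0 $ j - z $ j) / 2 < x n $ j"
        by (rule order_tendstoD)
      then show ?thesis by eventually_elim (simp add: field_simps)
    qed
    then have "\<forall>\<^sub>F n in sequentially. \<forall>j. 0 \<le> x n $ j + (z $ j - x0 $ j) / 2"
      by (rule eventually_all_finite)
    then obtain n where n: "\<forall>j. 0 \<le> x n $ j + (z $ j - x0 $ j) / 2"
      using eventually_sequentially by auto
    define w where "w = x n + (1/2) *\<^sub>R (z - x0)"
    have "A *v w = \<beta> n"
      by (simp add: w_def matrix_vector_right_distrib matrix_vector_mult_scaleR
          matrix_vector_mult_diff_distrib feas(1) zA Ax0)
    moreover have "\<forall>j. 0 \<le> w $ j" using n by (simp add: w_def)
    ultimately have "w \<in> lp_feasible A (\<beta> n)" by (simp add: lp_feasible_def)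
    then have "c \<bullet> x n \<le> c \<bullet> w" using opt[of n] by (auto simp: lp_optimal_set_def)
    then show ?thesis by (simp add: w_def inner_add_right inner_diff_right)
  qed
  then have "x0 \<in> lp_optimal_set A c \<beta>0" using f0 by (simp add: lp_optimal_set_def)
  then show "l \<in> {p. snd p \<in> lp_optimal_set A c (fst p)}" using l by simp
qed

lemma multi_borel:
  fixes A :: "real^'d^'m" and c :: "real^'d"
  shows "{\<beta>. \<exists>x\<in>lp_optimal_set A c \<beta>. \<exists>y\<in>lp_optimal_set A c \<beta>. x \<noteq> y} \<in> sets borel"
proof -
  define \<Gamma> where "\<Gamma> = {p :: (real^'m) \<times> (real^'d). snd p \<in> lp_optimal_set A c (fst p)}"
  have G: "closed \<Gamma>" unfolding \<Gamma>_def by (rule graph_closed)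
  define T where "T k = {p :: (real^'m) \<times> (real^'d) \<times> (real^'d). (fst p, fst (snd p)) \<in> \<Gamma> \<and>
     (fst p, snd (snd p)) \<in> \<Gamma> \<and> norm (fst p) \<le> real k \<and> norm (fst (snd p)) \<le> real k \<and>
     norm (snd (snd p)) \<le> real k \<and> 1 / real (Suc k) \<le> dist (fst (snd p)) (snd (snd p))}" for k
  have cT: "compact (T k)" for k
  proof -
    have c1: "closed ((\<lambda>p :: (real^'m) \<times> (real^'d) \<times> (real^'d). (fst p, fst (snd p))) -` \<Gamma>)"
      by (rule closed_vimage[OF G]) (intro continuous_intros)
    have c2: "closed ((\<lambda>p :: (real^'m) \<times> (real^'d) \<times> (real^'d). (fst p, snd (snd p))) -` \<Gamma>)"
      by (rule closed_vimage[OF G]) (intro continuous_intros)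
    have c3: "closed {p :: (real^'m) \<times> (real^'d) \<times> (real^'d). norm (fst p) \<le> real k}"
      by (intro closed_Collect_le continuous_intros)
    have c4: "closed {p :: (real^'m) \<times> (real^'d) \<times> (real^'d). norm (fst (snd p)) \<le> real k}"
      by (intro closed_Collect_le continuous_intros)
    have c5: "closed {p :: (real^'m) \<times> (real^'d) \<times> (real^'d). norm (snd (snd p)) \<le> real k}"
      by (intro closed_Collect_le continuous_intros)
    have c6: "closed {p :: (real^'m) \<times> (real^'d) \<times> (real^'d). 1 / real (Suc k) \<le> dist (fst (snd p)) (snd (snd p))}"
      by (intro closed_Collect_le continuous_intros)
    have eq: "T k = ((\<lambda>p. (fst p, fst (snd p))) -` \<Gamma>) \<inter> ((\<lambda>p. (fst p, snd (snd p))) -` \<Gamma>) \<inter>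
        {p. norm (fst p) \<le> real k} \<inter> {p. norm (fst (snd p)) \<le> real k} \<inter>
        {p. norm (snd (snd p)) \<le> real k} \<inter> {p. 1 / real (Suc k) \<le> dist (fst (snd p)) (snd (snd p))}"
      unfolding T_def by auto
    have cl: "closed (T k)" unfolding eq using c1 c2 c3 c4 c5 c6 by (intro closed_Int)
    have "T k \<subseteq> cball 0 (real k) \<times> (cball 0 (real k) \<times> cball 0 (real k))"
      unfolding T_def by (auto simp: mem_cball_0)
    then have "bounded (T k)" by (rule bounded_subset[rotated]) (intro bounded_Times bounded_cball)
    then show ?thesis using cl by (simp add: compact_eq_bounded_closed)
  qed
  have eqS: "{\<beta>. \<exists>x\<in>lp_optimal_set A c \<beta>. \<exists>y\<in>lp_optimal_set A c \<beta>. x \<noteq> y} = (\<Union>k. fst ` T k)"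
  proof (intro equalityI subsetI)
    fix \<beta> assume "\<beta> \<in> {\<beta>. \<exists>x\<in>lp_optimal_set A c \<beta>. \<exists>y\<in>lp_optimal_set A c \<beta>. x \<noteq> y}"
    then obtain x y where xy: "x \<in> lp_optimal_set A c \<beta>" "y \<in> lp_optimal_set A c \<beta>" "x \<noteq> y" by auto
    have "dist x y > 0" using xy by simp
    then obtain k0 where k0: "1 / real (Suc k0) < dist x y"
      using reals_Archimedean[OF \<open>dist x y > 0\<close>] by (auto simp: inverse_eq_divide)
    obtain k1 where k1: "max (norm \<beta>) (max (norm x) (norm y)) \<le> real k1"
      using real_arch_simple by blast
    define k where "k = max k0 k1"
    have "1 / real (Suc k) \<le> 1 / real (Suc k0)" unfolding k_def
      by (intro divide_left_mono) auto
    moreover have "real k1 \<le> real k" unfolding k_def by simp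
    ultimately have "1 / real (Suc k) \<le> dist x y" "norm \<beta> \<le> real k" "norm x \<le> real k" "norm y \<le> real k"
      using k0 k1 by auto
    then have "(\<beta>, x, y) \<in> T k" using xy unfolding T_def \<Gamma>_def
      by simp
    then have "\<beta> \<in> fst ` T k" by (metis fst_conv image_eqI)
    then show "\<beta> \<in> (\<Union>k. fst ` T k)" by blast
  next
    fix \<beta> assume "\<beta> \<in> (\<Union>k. fst ` T k)"
    then obtain k x y where "(\<beta>, x, y) \<in> T k" by auto
    then have h: "x \<in> lp_optimal_set A c \<beta>" "y \<in> lp_optimal_set A c \<beta>" "1 / real (Suc k) \<le> dist x y"
      unfolding T_def \<Gamma>_def by auto
    have "0 < 1 / real (Suc k)" by simp
    then have "0 < dist x y" using h(3) by linarith
    then have "x \<noteq> y" by auto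
    then show "\<beta> \<in> {\<beta>. \<exists>x\<in>lp_optimal_set A c \<beta>. \<exists>y\<in>lp_optimal_set A c \<beta>. x \<noteq> y}"
      using h by blast
  qed
  have "fst ` T k \<in> sets borel" for k
    by (rule borel_closed, rule compact_imp_closed, rule compact_continuous_image)
       (auto intro: continuous_intros cT)
  then show ?thesis unfolding eqS by auto
qed


lemma opt_of_support:
  fixes A :: "real^'d^'m"
  assumes dual: "\<forall>j. (transpose A *v l) $ j \<le> c $ j"
    and Ax: "A *v x = \<beta>" and xnn: "\<forall>j. 0 \<le> x $ j"
    and supp: "\<forall>j. x $ j \<noteq> 0 \<longrightarrow> (transpose A *v l) $ j = c $ j"
  shows "x \<in> lp_optimal_set A c \<beta>"
proof -
  have f: "x \<in> lp_feasible A \<beta>" using Ax xnn by (simp add: lp_feasible_def)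
  have cx: "c \<bullet> x = l \<bullet> \<beta>"
  proof -
    have "c \<bullet> x = (transpose A *v l) \<bullet> x"
      unfolding inner_vec_def
      by (rule sum.cong[OF refl]) (metis supp inner_real_def mult_zero_right)
    also have "\<dots> = l \<bullet> \<beta>" by (simp only: transp_dot Ax)
    finally show ?thesis .
  qed
  have "c \<bullet> x \<le> c \<bullet> z" if "z \<in> lp_feasible A \<beta>" for z
  proof -
    have zA: "A *v z = \<beta>" and zn: "\<forall>j. 0 \<le> z $ j" using that by (auto simp: lp_feasible_def)
    have "c \<bullet> x = (transpose A *v l) \<bullet> z" using cx by (simp only: transp_dot zA)
    also have "\<dots> \<le> c \<bullet> z" unfolding inner_vec_def
      by (rule sum_mono) (simp only: inner_real_def, rule mult_right_mono, use dual zn in auto)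
    finally show ?thesis .
  qed
  then show ?thesis using f by (simp add: lp_optimal_set_def)
qed

lemma good_point:
  fixes A :: "real^'d^'m"
  assumes BI: "is_basis A I" and kI: "k \<notin> I"
    and dual: "\<forall>j. (transpose A *v l) $ j \<le> c $ j"
    and eqs: "\<forall>j\<in>insert k I. (transpose A *v l) $ j = c $ j"
    and xIn: "\<forall>j. 0 \<le> xI $ j" and xIs: "\<forall>j. j \<notin> I \<longrightarrow> xI $ j = 0" and xIA: "A *v xI = b"
    and K: "\<forall>\<beta>. norm (basic_sol A I \<beta>) \<le> norm \<beta> * K" and Kp: "K > 0"
    and t: "t > 0" and rho: "\<rho> \<le> t / (2 * K)"
    and p: "p = (\<chi> j. if j \<in> insert k I then 1 else 0)"
    and u: "u \<in> ball (t *\<^sub>R (A *v p)) \<rho>" and R: "R \<ge> 1"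
  shows "\<exists>x\<in>lp_optimal_set A c (b + (1/R) *\<^sub>R u). \<exists>y\<in>lp_optimal_set A c (b + (1/R) *\<^sub>R u). x \<noteq> y"
proof -
  let ?\<beta> = "b + (1/R) *\<^sub>R u"
  define w where "w = u - t *\<^sub>R (A *v p)"
  have nw: "norm w < \<rho>" using u by (simp add: w_def dist_norm norm_minus_commute)
  define wh where "wh = basic_sol A I w"
  have whA: "A *v wh = w" and whs: "\<forall>j. j \<notin> I \<longrightarrow> wh $ j = 0"
    using basis_sol[OF BI, of w] by (auto simp: wh_def)
  have nwh: "norm wh \<le> t / 2"
  proof -
    have "norm wh \<le> norm w * K" using K by (simp add: wh_def)
    also have "\<dots> \<le> \<rho> * K" using nw Kp by simp
    also have "\<dots> \<le> t / (2 * K) * K" using mult_right_mono[OF rho, of K] Kp by simp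
    also have "\<dots> = t / 2" using Kp by simp
    finally show ?thesis .
  qed
  define x where "x = xI + (1/R) *\<^sub>R (t *\<^sub>R p + wh)"
  have xA: "A *v x = ?\<beta>"
    by (simp add: x_def matrix_vector_right_distrib matrix_vector_mult_scaleR xIA whA w_def algebra_simps)
  define \<mu> where "\<mu> = (1/R) * (t/2)"
  have mu: "\<mu> > 0" using t R by (simp add: \<mu>_def)
  have xpos: "x $ j \<ge> \<mu>" if "j \<in> insert k I" for j
  proof -
    have "\<bar>wh $ j\<bar> \<le> t / 2" using component_le_norm_cart[of wh j] nwh by linarith
    then have "t / 2 \<le> t * p $ j + wh $ j" using that p by auto
    then have "(1/R) * (t/2) \<le> (1/R) * (t * p $ j + wh $ j)" by (rule mult_left_mono) (use R in auto)
    moreover have "0 \<le> xI $ j" using xIn by simp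
    ultimately show ?thesis by (simp add: x_def \<mu>_def)
  qed
  have xzero: "x $ j = 0" if "j \<notin> insert k I" for j
    using that xIs whs p by (simp add: x_def)
  define h where "h = axis k 1 - basic_sol A I (A *v axis k 1)"
  have hA: "A *v h = 0"
    using basis_sol[OF BI, of "A *v axis k 1"] by (simp add: h_def matrix_vector_mult_diff_distrib)
  have hk: "h $ k = 1" using basis_sol[OF BI, of "A *v axis k 1"] kI by (simp add: h_def axis_def)
  have hz: "h $ j = 0" if "j \<notin> insert k I" for j
    using that basis_sol[OF BI, of "A *v axis k 1"] by (simp add: h_def axis_def)
  define \<epsilon> where "\<epsilon> = \<mu> / (norm h + 1)"
  have ep: "\<epsilon> > 0" unfolding \<epsilon>_def using mu by (intro divide_pos_pos) (auto intro: add_nonneg_pos)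
  define y where "y = x + \<epsilon> *\<^sub>R h"
  have yA: "A *v y = ?\<beta>" by (simp add: y_def matrix_vector_right_distrib matrix_vector_mult_scaleR xA hA)
  have ypos: "y $ j \<ge> 0" if "j \<in> insert k I" for j
  proof -
    have "\<bar>h $ j\<bar> \<le> norm h" by (rule component_le_norm_cart)
    then have "\<epsilon> * \<bar>h $ j\<bar> \<le> \<epsilon> * norm h" using ep by (simp add: mult_left_mono)
    also have "\<epsilon> * norm h \<le> \<mu>"
    proof -
      have "\<epsilon> * norm h = \<mu> * (norm h / (norm h + 1))" by (simp add: \<epsilon>_def field_simps)
      also have "\<dots> \<le> \<mu> * 1" using mu by (intro mult_left_mono) (auto simp: divide_le_eq_1 add_nonneg_pos)
      finally show ?thesis by simp
    qed
    finally have "\<epsilon> * \<bar>h $ j\<bar> \<le> \<mu>" .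
    moreover have "- (\<epsilon> * \<bar>h $ j\<bar>) \<le> \<epsilon> * h $ j" using ep
      by (metis abs_ge_minus_self abs_mult abs_of_pos minus_le_iff)
    ultimately show ?thesis using xpos[OF that] by (simp add: y_def)
  qed
  have yzero: "y $ j = 0" if "j \<notin> insert k I" for j
    using that xzero hz by (simp add: y_def)
  have xnn: "\<forall>j. 0 \<le> x $ j" using xpos xzero mu by (metis order.trans less_imp_le order_refl)
  have ynn: "\<forall>j. 0 \<le> y $ j" using ypos yzero by (metis order_refl)
  have xo: "x \<in> lp_optimal_set A c ?\<beta>"
    by (rule opt_of_support[OF dual xA xnn]) (use xzero eqs in blast)
  have yo: "y \<in> lp_optimal_set A c ?\<beta>"
    by (rule opt_of_support[OF dual yA ynn]) (use yzero eqs in blast)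
  have "y $ k \<noteq> x $ k" using ep hk by (simp add: y_def)
  then have "x \<noteq> y" by auto
  then show ?thesis using xo yo by blast
qed


theorem lemma5p5:
  fixes A :: "real^'d^'m" and b :: "real^'m" and c :: "real^'d"
    and M :: "'a measure" and r :: "nat \<Rightarrow> real" and bn :: "nat \<Rightarrow> 'a \<Rightarrow> real^'m"
    and G :: "(real^'m) measure" and g :: "real^'m \<Rightarrow> real"
  assumes full_rank: "rank A = CARD('m)" and m_le_d: "CARD('m) \<le> CARD('d)"
    and A1: "lp_optimal_set A c b \<noteq> {}" "bounded (lp_optimal_set A c b)"
    and M: "prob_space M"
    and r: "filterlim r at_top sequentially"
    and bn_meas: "\<And>n. bn n \<in> borel_measurable M"
    and G_prob: "prob_space G"
    and g_meas: "g \<in> borel_measurable lborel" and g_nonneg: "\<And>x. 0 \<le> g x"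
    and G_dens: "G = density lborel (\<lambda>x. ennreal (g x))"
    and g_pos: "\<exists>e>0. \<forall>x\<in>ball 0 e. 0 < g x"
    and B1: "conv_in_distr M (\<lambda>n \<omega>. r n *\<^sub>R (bn n \<omega> - b)) G"
    and B2: "(\<lambda>n. measure M {\<omega> \<in> space M. lp_optimal_set A c (bn n \<omega>) \<noteq> {}}) \<longlonglongrightarrow> 1"
    and not_A3: "\<not> cond_A3 A c b"
  shows "0 < liminf (\<lambda>n. ereal (measure M
           {\<omega> \<in> space M. \<exists>x\<in>lp_optimal_set A c (bn n \<omega>).
                           \<exists>y\<in>lp_optimal_set A c (bn n \<omega>). x \<noteq> y}))"
proof -
  interpret PM: prob_space M by (rule M)
  interpret PG: prob_space G by (rule G_prob)
  obtain I J where IJ: "I \<in> opt_bases A c b" "J \<in> opt_bases A c b" "I \<noteq> J"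
      "dual_sol A c I = dual_sol A c J"
    using not_A3 unfolding cond_A3_def by blast
  define l where "l = dual_sol A c I"
  have BI: "is_basis A I" and BJ: "is_basis A J"
    and dual: "\<forall>j. (transpose A *v l) $ j \<le> c $ j"
    and xIn: "\<forall>j. 0 \<le> basic_sol A I b $ j"
    using IJ by (auto simp: opt_bases_def dual_feasible_basis_def l_def)
  have "\<not> J \<subseteq> I"
  proof
    assume "J \<subseteq> I"
    moreover have "card J = card I" using BI BJ by (simp add: is_basis_def)
    ultimately have "J = I" by (intro card_subset_eq) auto
    then show False using IJ(3) by simp
  qed
  then obtain k where k: "k \<in> J" "k \<notin> I" by blast
  have eqs: "\<forall>j\<in>insert k I. (transpose A *v l) $ j = c $ j"
    using dual_sol_prop[OF BI, of c] dual_sol_prop[OF BJ, of c] k IJ(4) by (auto simp: l_def)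
  define xI where "xI = basic_sol A I b"
  have xIs: "\<forall>j. j \<notin> I \<longrightarrow> xI $ j = 0" and xIA: "A *v xI = b"
    using basis_sol[OF BI, of b] by (auto simp: xI_def)
  have "bounded_linear (basic_sol A I)" using basis_linear[OF BI] by (simp add: linear_conv_bounded_linear)
  then obtain K where Kp: "K > 0" and K: "\<forall>\<beta>. norm (basic_sol A I \<beta>) \<le> norm \<beta> * K"
    using bounded_linear.pos_bounded by blast
  obtain e where e: "e > 0" "\<forall>x\<in>ball 0 e. 0 < g x" using g_pos by blast
  define p :: "real^'d" where "p = (\<chi> j. if j \<in> insert k I then 1 else 0)"
  define v where "v = A *v p"
  define t where "t = e / (2 * (norm v + 1))"
  define \<rho> where "\<rho> = min (t / (2 * K)) (e / 2)"
  define u0 where "u0 = t *\<^sub>R v"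
  have t: "t > 0" using e by (simp add: t_def add_nonneg_pos)
  have rho: "\<rho> > 0" "\<rho> \<le> t / (2 * K)" "\<rho> \<le> e / 2" using t Kp e by (auto simp: \<rho>_def)
  have nu0: "norm u0 < e / 2"
  proof -
    have "norm u0 = t * norm v" using t by (simp add: u0_def)
    also have "\<dots> = e * norm v / (2 * (norm v + 1))" by (simp add: t_def)
    also have "\<dots> < e / 2"
    proof -
      have p1: "0 < norm v + 1" by (simp add: add_nonneg_pos)
      have "norm v / (norm v + 1) < 1" using p1 by (simp add: divide_less_eq)
      then have "(e/2) * (norm v / (norm v + 1)) < (e/2) * 1"
        by (rule mult_strict_left_mono) (use e in simp)
      then show ?thesis by simp
    qed
    finally show ?thesis .
  qed
  have ballsub: "ball u0 \<rho> \<subseteq> ball 0 e"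
  proof
    fix u assume "u \<in> ball u0 \<rho>"
    then have "norm (u - u0) < \<rho>" by (simp add: dist_norm norm_minus_commute)
    moreover have "norm u \<le> norm u0 + norm (u - u0)" by (metis norm_triangle_sub add.commute)
    ultimately show "u \<in> ball 0 e" using nu0 rho by simp
  qed
  define X where "X n \<omega> = r n *\<^sub>R (bn n \<omega> - b)" for n \<omega>
  define S where "S = {\<beta>. \<exists>x\<in>lp_optimal_set A c \<beta>. \<exists>y\<in>lp_optimal_set A c \<beta>. x \<noteq> y}"
  define E where "E n = {\<omega> \<in> space M. \<exists>x\<in>lp_optimal_set A c (bn n \<omega>).
                           \<exists>y\<in>lp_optimal_set A c (bn n \<omega>). x \<noteq> y}" for n
  have Emeas: "E n \<in> sets M" for n
  proof -
    have "E n = bn n -` S \<inter> space M" by (auto simp: E_def S_def)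
    then show ?thesis using measurable_sets[OF bn_meas multi_borel[of A c]] by (simp add: S_def)
  qed
  have Xmeas: "X n \<in> borel_measurable M" for n
    unfolding X_def using bn_meas[of n] by measurable
  define B where "B n = {\<omega> \<in> space M. X n \<omega> \<in> ball u0 \<rho>}" for n
  have Bmeas: "B n \<in> sets M" for n
  proof -
    have "B n = X n -` ball u0 \<rho> \<inter> space M" by (auto simp: B_def)
    then show ?thesis using measurable_sets[OF Xmeas borel_open[OF open_ball]] by simp
  qed
  have ev1: "\<forall>\<^sub>F n in sequentially. 1 \<le> r n" using r by (simp add: filterlim_at_top)
  have BE: "B n \<subseteq> E n" if rn: "1 \<le> r n" for n
  proof
    fix \<omega> assume "\<omega> \<in> B n"
    then have om: "\<omega> \<in> space M" and Xb: "X n \<omega> \<in> ball (t *\<^sub>R (A *v p)) \<rho>"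
      by (auto simp: B_def u0_def v_def)
    have "bn n \<omega> = b + (1 / r n) *\<^sub>R X n \<omega>" using rn by (simp add: X_def algebra_simps)
    moreover have "\<exists>x\<in>lp_optimal_set A c (b + (1 / r n) *\<^sub>R X n \<omega>).
        \<exists>y\<in>lp_optimal_set A c (b + (1 / r n) *\<^sub>R X n \<omega>). x \<noteq> y"
      by (rule good_point[OF BI k(2) dual eqs xIn[folded xI_def] xIs xIA K Kp t rho(2) p_def Xb rn])
    ultimately show "\<omega> \<in> E n" using om by (simp add: E_def)
  qed
  define f where "f u = max 0 (1 - dist u u0 / \<rho>)" for u
  have fcont: "continuous_on UNIV f" unfolding f_def using rho(1) by (intro continuous_intros) auto
  have f01: "0 \<le> f u" "f u \<le> 1" for u using rho by (auto simp: f_def)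
  have fbd: "bounded (range f)" unfolding bounded_iff using f01 by (intro exI[of _ 1]) auto
  have fB: "(borel_measurable (borel :: (real^'m) measure) :: (real^'m \<Rightarrow> real) set) = borel_measurable G"
    by (rule measurable_cong_sets) (auto simp: G_dens)
  have fmeasG: "f \<in> borel_measurable G" using borel_measurable_continuous_onI[OF fcont] fB by simp
  have lim: "(\<lambda>n. \<integral>\<omega>. f (X n \<omega>) \<partial>M) \<longlonglongrightarrow> (\<integral>x. f x \<partial>G)"
    using B1 fcont fbd unfolding conv_in_distr_def X_def by blast
  have le: "(\<integral>\<omega>. f (X n \<omega>) \<partial>M) \<le> measure M (E n)" if rn: "1 \<le> r n" for n
  proof -
    have fXm: "(\<lambda>\<omega>. f (X n \<omega>)) \<in> borel_measurable M"
      using measurable_comp[OF Xmeas borel_measurable_continuous_onI[OF fcont]] by (simp add: comp_def)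
    have "(\<integral>\<omega>. f (X n \<omega>) \<partial>M) \<le> (\<integral>\<omega>. indicator (B n) \<omega> \<partial>M)"
    proof (rule integral_mono)
      show "integrable M (\<lambda>\<omega>. f (X n \<omega>))"
        by (rule PM.integrable_const_bound[where B=1]) (use f01 fXm in auto)
      show "integrable M (indicat_real (B n))"
        by (rule integrable_real_indicator[OF Bmeas]) (simp add: PM.emeasure_finite less_top[symmetric])
      fix \<omega> assume "\<omega> \<in> space M"
      show "f (X n \<omega>) \<le> indicator (B n) \<omega>"
      proof (cases "\<omega> \<in> B n")
        case True then show ?thesis using f01 by simp
      next
        case False
        then have "\<not> dist u0 (X n \<omega>) < \<rho>" using \<open>\<omega> \<in> space M\<close> by (auto simp: B_def)
        then have "f (X n \<omega>) = 0" using rho by (simp add: f_def dist_commute field_simps)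
        then show ?thesis by simp
      qed
    qed
    also have "\<dots> = measure M (B n)" using Bmeas[of n] sets.sets_into_space by (simp add: Int_absorb2)
    also have "\<dots> \<le> measure M (E n)" by (rule PM.finite_measure_mono[OF BE[OF rn] Emeas])
    finally show ?thesis .
  qed
  have Lpos: "0 < (\<integral>x. f x \<partial>G)"
  proof -
    have nn: "0 \<le> (\<integral>x. f x \<partial>G)" using f01 by (simp add: integral_nonneg)
    have intG: "integrable G f"
      by (rule PG.integrable_const_bound[where B=1]) (use f01 fmeasG in auto)
    have "(\<integral>x. f x \<partial>G) \<noteq> 0"
    proof
      assume "(\<integral>x. f x \<partial>G) = 0"
      then have "AE x in G. f x = 0" using integral_nonneg_eq_0_iff_AE[OF intG] f01 by simp
      then have "AE x in lborel. 0 < ennreal (g x) \<longrightarrow> f x = 0"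
        unfolding G_dens by (subst (asm) AE_density) (use g_meas in auto)
      then have "AE x in lborel. x \<notin> ball u0 \<rho>"
      proof (rule eventually_mono)
        fix x assume h: "0 < ennreal (g x) \<longrightarrow> f x = 0"
        show "x \<notin> ball u0 \<rho>"
        proof
          assume xb: "x \<in> ball u0 \<rho>"
          then have "0 < g x" using ballsub e(2) by blast
          then have "f x = 0" using h by simp
          moreover have "0 < f x" using xb rho by (simp add: f_def field_simps dist_commute)
          ultimately show False by simp
        qed
      qed
      then have "emeasure lborel (ball u0 \<rho>) = 0"
        by (subst (asm) AE_iff_measurable[where N="ball u0 \<rho>"]) auto
      moreover have "emeasure lborel (ball u0 \<rho>) > 0"
        using rho unit_ball_vol_pos[of "real DIM(real^'m)"] by (simp add: emeasure_ball)
      ultimately show False by simp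
    qed
    then show ?thesis using nn by simp
  qed
  have "Liminf sequentially (\<lambda>n. ereal (\<integral>\<omega>. f (X n \<omega>) \<partial>M)) \<le>
        Liminf sequentially (\<lambda>n. ereal (measure M (E n)))"
    by (rule Liminf_mono) (use ev1 le in \<open>auto elim: eventually_mono\<close>)
  moreover have "Liminf sequentially (\<lambda>n. ereal (\<integral>\<omega>. f (X n \<omega>) \<partial>M)) = ereal (\<integral>x. f x \<partial>G)"
    by (rule lim_imp_Liminf) (auto intro: tendsto_ereal lim)
  moreover have "0 < ereal (\<integral>x. f x \<partial>G)" using Lpos by simp
  ultimately have "0 < Liminf sequentially (\<lambda>n. ereal (measure M (E n)))"
    by (metis order_less_le_trans)
  then show ?thesis by (simp add: E_def)
qed

end
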